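(* Let $h\ge1$, $\omega=e^{2\pi\mathrm{i}/h}$, and consider walks with steps in $\{\pm1,\dots,\pm h\}$. For $k\ge1$ and $n\ge0$, the number of positive walks of length $n$ from the origin to altitude $k$ (walks $0=y_0,\dots,y_n=k$ with $y_i\ge1$ for $1\le i\le n$) and the number of positive meanders of length $n$ (walks $0=y_0,\dots,y_n$ with $y_i\ge1$ for $1\le i\le n$) are respectively $$[z^n]G_{0,k}(z)=\sum_{n_1+\dots+n_h=nh}\ \sum_{i_1+\dots+i_h=k}\ \prod_{j=1}^h\frac{i_j}{n_j}\binom{n_j/h}{n_j-i_j}^{*}_{2h}\ \omega^{\sum_{j=1}^h(j-1)n_j},$$ $$[z^n]M_{>0}(z)=\sum_{n_1+\dots+n_h=nh}\ \sum_{i_1,\dots,i_h\ge0}\ \prod_{j=1}^h\frac{i_j}{n_j}\binom{n_j/h}{n_j-i_j}^{*}_{2h}\ \omega^{\sum_{j=1}^h(j-1)n_j},$$ where all $n_j,i_j$ range over nonnegative integers.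
   Context: For real $\alpha$ and integer $k$, $\binom{\alpha}{k}^{*}_{2h}:=[u^k](1+u+\dots+u^{h-1}+u^{h+1}+\dots+u^{2h})^{\alpha}$ (formal power series with constant term $1$; $0$ for $k<0$). In the products, the factor $\frac{i}{n}\binom{n/h}{n-i}^{*}_{2h}$ stands for $[z^n]U^i(z)$, where $U(z)=z+\cdots$ is the power series root of $1-z^h(U^{-h}+\dots+U^{-1}+U+\dots+U^{h})=0$; concretely it equals $1$ if $i=n=0$ and $0$ if exactly one of $i,n$ is $0$. *)

theory Defs
  imports "HOL-Analysis.Analysis" "HOL-Computational_Algebra.Formal_Power_Series"
begin

definition stepP_minus1 :: "nat \<Rightarrow> real fps" where
  "stepP_minus1 h = Abs_fps (\<lambda>j. if 1 \<le> j \<and> j \<le> 2*h \<and> j \<noteq> h then 1 else 0)"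

definition stepP_pow :: "nat \<Rightarrow> real \<Rightarrow> real fps" where
  "stepP_pow h \<alpha> = fps_binomial \<alpha> oo stepP_minus1 h"

definition gbinom2h :: "nat \<Rightarrow> real \<Rightarrow> int \<Rightarrow> real" where
  "gbinom2h h \<alpha> k = (if k < 0 then 0 else fps_nth (stepP_pow h \<alpha>) (nat k))"

definition Ucoef :: "nat \<Rightarrow> nat \<Rightarrow> nat \<Rightarrow> complex" where
  "Ucoef h n i =
     (if n = 0 \<and> i = 0 then 1
      else if n = 0 \<or> i = 0 then 0
      else complex_of_real (real i / real n * gbinom2h h (real n / real h) (int n - int i)))"

definition step_set :: "nat \<Rightarrow> int set" where
  "step_set h = {d. 1 \<le> \<bar>d\<bar> \<and> \<bar>d\<bar> \<le> int h}"

text \<open>Walks given by their step lists; y_i = sum of the first i steps.\<close>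
definition pos_walks :: "nat \<Rightarrow> nat \<Rightarrow> int \<Rightarrow> int list set" where
  "pos_walks h n k = {s. length s = n \<and> set s \<subseteq> step_set h \<and>
      (\<forall>i\<in>{1..n}. sum_list (take i s) \<ge> 1) \<and> sum_list s = k}"

definition pos_meanders :: "nat \<Rightarrow> nat \<Rightarrow> int list set" where
  "pos_meanders h n = {s. length s = n \<and> set s \<subseteq> step_set h \<and>
      (\<forall>i\<in>{1..n}. sum_list (take i s) \<ge> 1)}"

end

theory Submission
  imports Defs "HOL-Computational_Algebra.Formal_Laurent_Series" "HOL-Computational_Algebra.Polynomial_FPS"
begin

lemma fps_prod_nth_lists:
  fixes f :: "nat \<Rightarrow> 'a::comm_semiring_1 fps"
  shows "fps_nth (\<Prod>j<h. f j) N = (\<Sum>ns\<in>{ns. length ns = h \<and> sum_list ns = N}. \<Prod>j<h. fps_nth (f j) (ns!j))"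
proof (induction h arbitrary: N)
  case 0
  have "{ns::nat list. length ns = 0 \<and> sum_list ns = N} = (if N = 0 then {[]} else {})" by auto
  then show ?case by simp
next
  case (Suc h)
  let ?L = "\<lambda>h N. {ns::nat list. length ns = h \<and> sum_list ns = N}"
  have "fps_nth (\<Prod>j<Suc h. f j) N = fps_nth ((\<Prod>j<h. f j) * f h) N" by simp
  also have "\<dots> = (\<Sum>i=0..N. fps_nth (\<Prod>j<h. f j) i * fps_nth (f h) (N - i))" by (rule fps_mult_nth)
  also have "\<dots> = (\<Sum>i=0..N. \<Sum>ns\<in>?L h i. (\<Prod>j<h. fps_nth (f j) (ns!j)) * fps_nth (f h) (N - i))"
    by (simp add: Suc sum_distrib_right)
  also have "\<dots> = (\<Sum>(i,ns)\<in>Sigma {0..N} (\<lambda>i. ?L h i). (\<Prod>j<h. fps_nth (f j) (ns!j)) * fps_nth (f h) (N - i))"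
  proof (rule sum.Sigma)
    show "finite {0..N}" by simp
    show "\<forall>i\<in>{0..N}. finite (?L h i)"
    proof
      fix i
      have "?L h i \<subseteq> {ns. set ns \<subseteq> {0..i} \<and> length ns = h}"
        by (auto simp: member_le_sum_list)
      moreover have "finite {ns. set ns \<subseteq> {0..i} \<and> length ns = h}"
        by (rule finite_lists_length_eq) simp
      ultimately show "finite (?L h i)" by (rule finite_subset)
    qed
  qed
  also have "\<dots> = (\<Sum>ns\<in>?L (Suc h) N. \<Prod>j<Suc h. fps_nth (f j) (ns!j))"
  proof (rule sum.reindex_bij_witness[where j = "\<lambda>(i,ns). ns @ [N - i]"
        and i = "\<lambda>ns. (sum_list (butlast ns), butlast ns)"])
    fix a assume a: "a \<in> Sigma {0..N} (\<lambda>i. ?L h i)"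
    then obtain i ns where [simp]: "a = (i, ns)" and ns: "length ns = h" "sum_list ns = i" "i \<le> N"
      by auto
    show "(\<lambda>ns. (sum_list (butlast ns), butlast ns)) ((\<lambda>(i,ns). ns @ [N - i]) a) = a"
      using ns by simp
    show "(\<lambda>(i,ns). ns @ [N - i]) a \<in> ?L (Suc h) N" using ns by simp
    show "(\<Prod>j<Suc h. fps_nth (f j) (((\<lambda>(i,ns). ns @ [N - i]) a) ! j)) =
          (case a of (i, ns) \<Rightarrow> (\<Prod>j<h. fps_nth (f j) (ns!j)) * fps_nth (f h) (N - i))"
      using ns by (simp add: nth_append)
  next
    fix b assume b: "b \<in> ?L (Suc h) N"
    then have lb: "length b = Suc h" "sum_list b = N" by auto
    then have bb: "b = butlast b @ [last b]"
      by (metis append_butlast_last_id list.size(3) nat.distinct(1))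
    have sb: "sum_list (butlast b) + last b = N" using lb(2) bb
      by (metis sum_list_append sum_list_simps add.right_neutral)
    show "(\<lambda>(i,ns). ns @ [N - i]) ((\<lambda>ns. (sum_list (butlast ns), butlast ns)) b) = b"
    proof -
      have "N - sum_list (butlast b) = last b" using sb by simp
      then show ?thesis using bb by simp
    qed
    show "(\<lambda>ns. (sum_list (butlast ns), butlast ns)) b \<in> Sigma {0..N} (\<lambda>i. ?L h i)"
      using sb lb by auto
  qed
  finally show ?case .
qed

lemma prod_linear_dvd:
  fixes p :: "'a::idom poly"
  assumes "finite A" "inj_on r A" "\<And>a. a \<in> A \<Longrightarrow> poly p (r a) = 0"
  shows "(\<Prod>a\<in>A. [:-r a, 1:]) dvd p"
  using assms
proof (induction A arbitrary: p rule: finite_induct)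
  case empty then show ?case by simp
next
  case (insert a A)
  have "[:-r a, 1:] dvd p" using insert.prems(2) by (simp add: dvd_iff_poly_eq_0)
  then obtain q where q: "p = [:-r a, 1:] * q" by (elim dvdE)
  have "poly q (r b) = 0" if b: "b \<in> A" for b
  proof -
    have "poly p (r b) = 0" using insert.prems(2) b by auto
    moreover have "r b \<noteq> r a" using insert.prems(1) insert.hyps(2) b by (simp add: inj_on_insert) (metis image_eqI)
    ultimately show ?thesis by (simp add: q)
  qed
  then have "(\<Prod>a\<in>A. [:-r a, 1:]) dvd q"
    using insert.IH insert.prems(1) by (auto intro: inj_on_subset)
  then have "[:-r a, 1:] * (\<Prod>a\<in>A. [:-r a, 1:]) dvd [:-r a, 1:] * q" by (rule mult_dvd_mono[OF dvd_refl])
  moreover have "(\<Prod>x\<in>insert a A. [:-r x, 1:]) = [:-r a, 1:] * (\<Prod>a\<in>A. [:-r a, 1:])"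
    using insert.hyps by (rule prod.insert)
  ultimately show ?case by (simp only: q)
qed

lemma fps_split_cutoff:
  fixes F :: "'a::comm_ring_1 fps"
  shows "F = (\<Sum>m\<le>n. fps_const (F$m) * fps_X^m) + fps_shift (Suc n) F * fps_X^(Suc n)"
proof (rule fps_ext)
  fix k
  have "(\<Sum>m\<le>n. fps_const (F$m) * fps_X^m) $ k = (\<Sum>m\<le>n. F$m * (if k = m then 1 else 0))"
    by (simp add: fps_sum_nth fps_X_power_nth)
  also have "\<dots> = (\<Sum>m\<le>n. if k = m then F$m else 0)"
    by (rule sum.cong) auto
  also have "\<dots> = (if k \<le> n then F$k else 0)"
    by (simp add: sum.delta')
  finally show "F $ k = ((\<Sum>m\<le>n. fps_const (F$m) * fps_X^m) + fps_shift (Suc n) F * fps_X^(Suc n)) $ k"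
    by (auto simp: fps_X_power_mult_right_nth simp del: power_Suc)
qed

lemma fps_to_fls_sum: "fps_to_fls (\<Sum>x\<in>A. f x) = (\<Sum>x\<in>A. fps_to_fls (f x))"
  by (induction A rule: infinite_finite_induct) auto

lemma res_deriv_pow_zero:
  fixes w :: "real fls"
  assumes "2 \<le> k"
  shows "fls_residue (fls_deriv w * inverse w ^ k) = 0"
proof -
  define v where "v = inverse w"
  obtain j where k: "k = Suc (Suc j)" using assms by (metis add_2_eq_Suc le_Suc_ex)
  have "fls_deriv (v ^ (Suc j)) = of_nat (Suc j) * v^j * fls_deriv v"
    by (subst fls_deriv_power) simp
  also have "fls_deriv v = - v * fls_deriv w * v"
    by (simp add: v_def fls_inverse_deriv_divring)
  also have "of_nat (Suc j) * v^j * (- v * fls_deriv w * v) = - (of_nat (Suc j) * (fls_deriv w * v^k))"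
    by (simp add: k algebra_simps)
  finally have d: "fls_deriv (v ^ (Suc j)) = - (of_nat (Suc j) * (fls_deriv w * v^k))" .
  have "fls_residue (fls_deriv (v ^ (Suc j))) = 0" by (rule fls_residue_deriv)
  then have "of_nat (Suc j) * fls_residue (fls_deriv w * v^k) = 0"
    unfolding d by (simp only: fls_residue_def fls_uminus_nth fls_mult_of_nat_nth neg_equal_0_iff_equal)
  then show ?thesis by (simp add: v_def)
qed


lemma lagrange:
  fixes \<phi> :: "real fps"
  assumes \<phi>0: "\<phi>$0 = 1" and i: "1 \<le> i" "i \<le> n"
  shows "of_nat n * (fps_inv (fps_X * inverse \<phi>) ^ i) $ n = of_nat i * (\<phi>^n) $ (n-i)"
proof -
  define W where "W = fps_X * inverse \<phi>"
  define U where "U = fps_inv W"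
  have W0: "W$0 = 0" by (simp add: W_def)
  have W1: "W$1 = 1" using \<phi>0 by (simp add: W_def)
  have UW: "U oo W = fps_X" using fps_inv[OF W0] W1 by (simp add: U_def)
  define F where "F = U^i"
  have FW: "F oo W = fps_X ^ i" by (simp add: F_def fps_compose_power[OF W0, symmetric] UW)
  define C where "C = fps_shift (Suc n) F oo W"
  have "F oo W = ((\<Sum>m\<le>n. fps_const (F$m) * fps_X^m) + fps_shift (Suc n) F * fps_X^(Suc n)) oo W"
    using fps_split_cutoff[of F n] by (rule arg_cong)
  then have eq: "fps_X^i = (\<Sum>m\<le>n. fps_const (F$m) * W^m) + C * W^(Suc n)"
    unfolding FW
    by (simp add: fps_compose_add_distrib fps_compose_sum_distrib fps_compose_mult_distrib[OF W0]
        fps_compose_power[OF W0, symmetric] W0 C_def del: power_Suc)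
  define w where "w = fps_to_fls W"
  define c where "c = fps_to_fls C"
  define v where "v = inverse w"
  have wnz: "w \<noteq> 0" using W1 by (auto simp: w_def)
  have wv: "w * v = 1" using wnz by (simp add: v_def)
  have eqf: "fls_X^i = (\<Sum>m\<le>n. fls_const (F$m) * w^m) + c * w^(Suc n)"
    using arg_cong[of _ _ fps_to_fls, OF eq]
    by (simp add: fps_to_fls_sum fps_to_fls_power fls_times_fps_to_fls w_def c_def del: power_Suc)
  have "fls_residue (fls_deriv (fls_X^i) * v^n) =
        fls_residue (fls_deriv ((\<Sum>m\<le>n. fls_const (F$m) * w^m) + c * w^(Suc n)) * v^n)"
    by (simp only: eqf)
  moreover have "fls_residue (fls_deriv (fls_X^i) * v^n) = of_nat i * (\<phi>^n) $ (n-i)"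
  proof -
    have "w * (fls_X_inv * fps_to_fls \<phi>) = 1"
    proof -
      have "w * (fls_X_inv * fps_to_fls \<phi>) = (fls_X * fls_X_inv) * fps_to_fls (inverse \<phi> * \<phi>)"
        by (simp add: w_def W_def fls_times_fps_to_fls algebra_simps)
      also have "inverse \<phi> * \<phi> = 1" using \<phi>0 by (simp add: inverse_mult_eq_1)
      also have "fls_X * fls_X_inv = (1::real fls)"
        by (simp add: fls_X_times_conv_shift)
      finally show ?thesis by simp
    qed
    then have vv: "v = fls_X_inv * fps_to_fls \<phi>" unfolding v_def by (rule inverse_unique)
    have "fls_deriv (fls_X^i) * v^n = of_nat i * (fls_X^(i-1) * (fls_X_inv^n * fps_to_fls (\<phi>^n)))"
      by (simp add: fls_deriv_X_power vv power_mult_distrib fps_to_fls_power algebra_simps)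
    also have "fls_residue \<dots> = of_nat i * (\<phi>^n) $ (n-i)"
      using i by (simp add: fls_X_power_times_conv_shift fls_X_inv_power_times_conv_shift of_nat_diff nat_diff_distrib)
    finally show ?thesis .
  qed
  moreover have "fls_residue (fls_deriv ((\<Sum>m\<le>n. fls_const (F$m) * w^m) + c * w^(Suc n)) * v^n)
      = of_nat n * F $ n"
  proof -
    have pw: "w^m * v^k = v^(k-m)" if "m \<le> k" for m k
    proof -
      have "v^k = v^m * v^(k-m)" using that by (simp flip: power_add)
      then have "w^m * v^k = (w * v)^m * v^(k-m)" by (simp add: power_mult_distrib algebra_simps)
      then show ?thesis by (simp add: wv)
    qed
    have fs: "fls_residue (fps_to_fls g) = 0" for g :: "real fps" by simp
    have ex: "fls_deriv ((\<Sum>m\<le>n. fls_const (F$m) * w^m) + c * w^(Suc n)) * v^n =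
       (\<Sum>m\<le>n. fls_const (F$m) * of_nat m * (w^(m-1) * v^n * fls_deriv w)) +
       of_nat (Suc n) * fps_to_fls (C * fps_deriv W) * (w^n * v^n) + fps_to_fls (fps_deriv C) * (w^Suc n * v^n)"
      by (simp add: fls_deriv_sum fls_deriv_power sum_distrib_right sum_distrib_left c_def w_def fls_deriv_fps_to_fls
          fls_times_fps_to_fls algebra_simps del: power_Suc)
    have T: "fls_residue (fls_const (F$m) * of_nat m * (w^(m-1) * v^n * fls_deriv w)) =
        (if m = n then of_nat n * F $ n else 0)" if "m \<le> n" for m
    proof (cases "m = 0")
      case True then show ?thesis using i by simp
    next
      case False
      then have "w^(m-1) * v^n = v^(n-m+1)" using pw[of "m-1" n] that by (simp add: Suc_diff_le)
      then have e: "fls_const (F$m) * of_nat m * (w^(m-1) * v^n * fls_deriv w) =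
          fls_const (F$m) * (of_nat m * (fls_deriv w * v^(n-m+1)))"
        by (simp add: algebra_simps)
      show ?thesis
      proof (cases "m = n")
        case True
        have sd: "fls_subdegree w = 1"
        proof -
          have "subdegree W = 1" using W0 W1 by (intro subdegreeI) (auto simp: less_Suc_eq)
          then show ?thesis by (simp add: w_def fls_subdegree_fls_to_fps)
        qed
        have "fls_residue (fls_deriv w * v) = 1"
          using fls_residue_deriv_times_inverse_eq_subdegree(1)[of w] sd by (simp add: v_def)
        then show ?thesis unfolding e using True by (simp del: fls_residue_def) (simp add: mult.commute)
      next
        case mn: False
        have "fls_residue (fls_deriv w * v^(n-m+1)) = 0"
          using res_deriv_pow_zero[of "n-m+1" w] mn that by (simp add: v_def)
        then show ?thesis unfolding e using mn by (simp del: fls_residue_def) (simp)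
      qed
    qed
    have "fls_residue (fls_deriv ((\<Sum>m\<le>n. fls_const (F$m) * w^m) + c * w^(Suc n)) * v^n) =
      (\<Sum>m\<le>n. fls_residue (fls_const (F$m) * of_nat m * (w^(m-1) * v^n * fls_deriv w)))"
    proof -
      have ws: "w^Suc n * v^n = w" using pw[of n n] by (simp add: mult.assoc)
      have r2: "fls_residue (of_nat (Suc n) * fps_to_fls (C * fps_deriv W) * (w^n * v^n)) = 0"
        using pw[of n n] by (simp del: of_nat_Suc)
      have r3: "fls_residue (fps_to_fls (fps_deriv C) * (w^Suc n * v^n)) = 0"
        unfolding ws by (simp add: w_def fls_times_fps_to_fls[symmetric] del: fls_residue_def) (simp add: fs)
      show ?thesis
        unfolding ex fls_residue_add r2 r3 by (simp add: fls_nth_sum)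
    qed
    also have "\<dots> = (\<Sum>m\<le>n. if m = n then of_nat n * F $ n else 0)"
      by (intro sum.cong refl, subst T) auto
    also have "\<dots> = of_nat n * F $ n" by simp
    finally show ?thesis .
  qed
  ultimately show ?thesis by (simp add: F_def U_def W_def)
qed


definition phiS :: "nat \<Rightarrow> real fps" where "phiS h = stepP_pow h (1 / real h)"
definition UU :: "nat \<Rightarrow> real fps" where "UU h = fps_inv (fps_X * inverse (phiS h))"

lemma stepP_minus1_0 [simp]: "stepP_minus1 h $ 0 = 0"
  by (simp add: stepP_minus1_def)

lemma stepP_pow_0 [simp]: "stepP_pow h a $ 0 = 1"
  by (simp add: stepP_pow_def)

lemma stepP_pow_power: "stepP_pow h a ^ m = stepP_pow h (of_nat m * a)"
  by (simp add: stepP_pow_def fps_compose_power fps_binomial_power)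

lemma phiS_0 [simp]: "phiS h $ 0 = 1" by (simp add: phiS_def)

lemma UU_0 [simp]: "UU h $ 0 = 0" by (simp add: UU_def fps_inv_def)
lemma UU_1 [simp]: "UU h $ 1 = 1" by (simp add: UU_def fps_inv_def)

lemma UU_pow_nth_lt: assumes "m < i" shows "(UU h ^ i) $ m = 0"
proof -
  have nz: "UU h \<noteq> 0" using UU_1[of h] by (metis fps_zero_nth zero_neq_one)
  have "1 \<le> subdegree (UU h)" using nz by (intro subdegree_geI) auto
  then have "i \<le> subdegree (UU h ^ i)" by simp
  with assms have "m < subdegree (UU h ^ i)" by linarith
  then show ?thesis by (rule nth_less_subdegree_zero)
qed

lemma Ucoef_UU:
  assumes h: "h \<ge> 1"
  shows "Ucoef h m i = complex_of_real ((UU h ^ i) $ m)"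
proof (cases "m = 0")
  case True
  then show ?thesis by (cases i) (auto simp: Ucoef_def)
next
  case m: False
  show ?thesis
  proof (cases "i = 0")
    case True then show ?thesis using m by (simp add: Ucoef_def)
  next
    case i: False
    show ?thesis
    proof (cases "i \<le> m")
      case im: True
      have "of_nat m * (UU h ^ i) $ m = of_nat i * (phiS h ^ m) $ (m-i)"
        unfolding UU_def by (rule lagrange) (use i im in auto)
      also have "phiS h ^ m = stepP_pow h (real m / real h)"
        by (simp add: phiS_def stepP_pow_power)
      finally have "(UU h ^ i) $ m = real i / real m * stepP_pow h (real m / real h) $ (m-i)"
        using m by (simp add: field_simps)
      then show ?thesis using m i im
        by (simp add: Ucoef_def gbinom2h_def nat_diff_distrib of_nat_diff)
    next
      case False
      then show ?thesis using m i UU_pow_nth_lt[of m i h]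
        by (simp add: Ucoef_def gbinom2h_def)
    qed
  qed
qed


lemma UU_eq: "UU h = fps_X * (phiS h oo UU h)"
proof -
  define W where "W = fps_X * inverse (phiS h)"
  have W0: "W$0 = 0" by (simp add: W_def)
  have W1: "W$1 = 1" by (simp add: W_def)
  have "W oo UU h = fps_X" unfolding UU_def W_def[symmetric] by (rule fps_inv_right[OF W0]) (use W1 in simp)
  moreover have "W oo UU h = UU h * inverse (phiS h oo UU h)"
    by (simp add: W_def fps_compose_mult_distrib fps_inverse_compose)
  ultimately have e: "UU h * inverse (phiS h oo UU h) = fps_X" by simp
  have "UU h = UU h * (inverse (phiS h oo UU h) * (phiS h oo UU h))"
    by (simp add: inverse_mult_eq_1)
  also have "\<dots> = fps_X * (phiS h oo UU h)" by (simp add: e flip: mult.assoc)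
  finally show ?thesis .
qed

lemma one_plus_Q: assumes "h \<ge> 1" shows "1 + stepP_minus1 h = (\<Sum>e\<in>{..2*h} - {h}. fps_X ^ e :: real fps)"
proof (rule fps_ext)
  fix k
  have "(\<Sum>e\<in>{..2*h} - {h}. fps_X ^ e :: real fps) $ k = (\<Sum>e\<in>{..2*h} - {h}. if k = e then 1 else 0)"
    by (simp add: fps_sum_nth fps_X_power_nth)
  also have "\<dots> = (if k \<in> {..2*h} - {h} then 1 else 0)" by (simp add: sum.delta')
  finally show "(1 + stepP_minus1 h) $ k = (\<Sum>e\<in>{..2*h} - {h}. fps_X ^ e :: real fps) $ k"
    using assms by (cases "k = 0") (auto simp: stepP_minus1_def)
qed

lemma UU_root:
  assumes h: "h \<ge> 1"
  shows "UU h ^ h = fps_X ^ h * (\<Sum>e\<in>{..2*h} - {h}. UU h ^ e)"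
proof -
  have "phiS h ^ h = stepP_pow h 1" using h by (simp add: phiS_def stepP_pow_power)
  also have "\<dots> = 1 + stepP_minus1 h"
    by (simp add: stepP_pow_def fps_binomial_1 fps_compose_add_distrib)
  finally have ph: "phiS h ^ h = (\<Sum>e\<in>{..2*h} - {h}. fps_X ^ e)" using one_plus_Q[OF h] by simp
  have "UU h ^ h = fps_X ^ h * (phiS h oo UU h) ^ h"
    by (subst UU_eq) (simp add: power_mult_distrib)
  also have "(phiS h oo UU h) ^ h = (phiS h ^ h) oo UU h" by (simp add: fps_compose_power)
  also have "\<dots> = (\<Sum>e\<in>{..2*h} - {h}. UU h ^ e)"
    by (simp add: ph fps_compose_sum_distrib fps_compose_power[symmetric])
  finally show ?thesis .
qed

lemma step_set_eq: "step_set h = {-int h..int h} - {0}"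
  by (auto simp: step_set_def)

lemma finite_step_set [simp]: "finite (step_set h)"
  by (simp add: step_set_eq)

lemma finite_pos_walks [simp]: "finite (pos_walks h n k)"
proof -
  have "pos_walks h n k \<subseteq> {s. set s \<subseteq> step_set h \<and> length s = n}"
    by (auto simp: pos_walks_def)
  moreover have "finite {s. set s \<subseteq> step_set h \<and> length s = n}"
    by (rule finite_lists_length_eq) simp
  ultimately show ?thesis by (rule finite_subset)
qed

lemma pos_walks_0: "pos_walks h 0 k = (if k = 0 then {[]} else {})"
  by (auto simp: pos_walks_def)

lemma pos_walks_neg: assumes "k < 1" shows "pos_walks h (Suc n) k = {}"
proof -
  have "s \<notin> pos_walks h (Suc n) k" for s
  proof
    assume s: "s \<in> pos_walks h (Suc n) k"
    then have a: "\<forall>i\<in>{1..Suc n}. sum_list (take i s) \<ge> 1" "length s = Suc n" "sum_list s = k"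
      by (auto simp: pos_walks_def)
    have "Suc n \<in> {1..Suc n}" by simp
    from bspec[OF a(1) this] have "sum_list (take (Suc n) s) \<ge> 1" .
    then show False using assms a by simp
  qed
  then show ?thesis by auto
qed

lemma pos_walks_Suc:
  assumes k: "k \<ge> 1"
  shows "pos_walks h (Suc n) k = (\<Union>d\<in>step_set h. (\<lambda>s. s @ [d]) ` pos_walks h n (k - d))"
proof (intro equalityI subsetI)
  fix s assume s: "s \<in> pos_walks h (Suc n) k"
  then have ls: "length s = Suc n" by (simp add: pos_walks_def)
  then have sb: "s = butlast s @ [last s]"
    by (metis append_butlast_last_id list.size(3) nat.distinct(1))
  define s' where "s' = butlast s"
  define d where "d = last s"
  have sd: "s = s' @ [d]" using sb by (simp add: s'_def d_def)
  have ls': "length s' = n" using ls by (simp add: s'_def)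
  have d: "d \<in> step_set h" using s sd by (auto simp: pos_walks_def)
  have "s' \<in> pos_walks h n (k - d)"
    unfolding pos_walks_def
  proof (intro CollectI conjI ballI)
    show "length s' = n" by (rule ls')
    show "set s' \<subseteq> step_set h" using s sd by (auto simp: pos_walks_def)
    fix i assume i: "i \<in> {1..n}"
    then have "take i s = take i s'" using sd ls' by simp
    moreover have "i \<in> {1..Suc n}" using i by auto
    then have "1 \<le> sum_list (take i s)" using s unfolding pos_walks_def by blast
    ultimately show "1 \<le> sum_list (take i s')" by simp
  next
    show "sum_list s' = k - d" using s sd by (auto simp: pos_walks_def)
  qed
  then show "s \<in> (\<Union>d\<in>step_set h. (\<lambda>s. s @ [d]) ` pos_walks h n (k - d))"
    using d sd by blast
next
  fix s assume "s \<in> (\<Union>d\<in>step_set h. (\<lambda>s. s @ [d]) ` pos_walks h n (k - d))"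
  then obtain d s' where d: "d \<in> step_set h" and s': "s' \<in> pos_walks h n (k - d)" and sd: "s = s' @ [d]"
    by auto
  have ls': "length s' = n" using s' by (simp add: pos_walks_def)
  show "s \<in> pos_walks h (Suc n) k"
    unfolding pos_walks_def
  proof (intro CollectI conjI ballI)
    show "length s = Suc n" using sd ls' by simp
    show "set s \<subseteq> step_set h" using s' d sd by (auto simp: pos_walks_def)
    show "sum_list s = k" using s' sd by (auto simp: pos_walks_def)
    fix i assume i: "i \<in> {1..Suc n}"
    show "1 \<le> sum_list (take i s)"
    proof (cases "i = Suc n")
      case True
      then have "take i s = s" using sd ls' by simp
      then show ?thesis using s' sd k by (auto simp: pos_walks_def)
    next
      case False
      then have "i \<in> {1..n}" using i by auto
      moreover have "take i s = take i s'" using sd ls' \<open>i \<in> {1..n}\<close> by simp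
      ultimately show ?thesis using s' by (auto simp: pos_walks_def)
    qed
  qed
qed

lemma card_pos_walks_Suc:
  assumes k: "k \<ge> 1"
  shows "card (pos_walks h (Suc n) k) = (\<Sum>d\<in>step_set h. card (pos_walks h n (k - d)))"
proof -
  have "card (pos_walks h (Suc n) k) = (\<Sum>d\<in>step_set h. card ((\<lambda>s. s @ [d]) ` pos_walks h n (k - d)))"
    unfolding pos_walks_Suc[OF k]
    by (rule card_UN_disjoint) auto
  also have "\<dots> = (\<Sum>d\<in>step_set h. card (pos_walks h n (k - d)))"
    by (intro sum.cong refl card_image) (auto intro: inj_onI)
  finally show ?thesis .
qed

lemma card_pos_walks_neg: assumes "k < 0" shows "card (pos_walks h n k) = 0"
  using assms by (cases n) (auto simp: pos_walks_0 pos_walks_neg)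

lemma sum_list_le_step: "set s \<subseteq> step_set h \<Longrightarrow> sum_list s \<le> int (length s * h)"
  by (induction s) (auto simp: step_set_def)

lemma pos_meanders_eq:
  "pos_meanders h n = (\<Union>k\<in>{0..n*h}. pos_walks h n (int k))"
proof (intro equalityI subsetI)
  fix s assume s: "s \<in> pos_meanders h n"
  then have ls: "length s = n" and ss: "set s \<subseteq> step_set h" by (auto simp: pos_meanders_def)
  have up: "sum_list s \<le> int (n*h)" using sum_list_le_step[OF ss] ls by simp
  have lo: "sum_list s \<ge> 0"
  proof (cases n)
    case 0 then show ?thesis using ls by simp
  next
    case (Suc m)
    then have "n \<in> {1..n}" by simp
    then have "1 \<le> sum_list (take n s)" using s unfolding pos_meanders_def by blast
    then show ?thesis using ls by simp
  qed
  have "s \<in> pos_walks h n (int (nat (sum_list s)))"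
    using s lo by (auto simp: pos_meanders_def pos_walks_def)
  moreover have "nat (sum_list s) \<in> {0..n*h}" using up lo by (simp add: nat_le_iff)
  ultimately show "s \<in> (\<Union>k\<in>{0..n*h}. pos_walks h n (int k))" by blast
qed (auto simp: pos_meanders_def pos_walks_def)

lemma card_pos_meanders:
  "card (pos_meanders h n) = (\<Sum>k=0..n*h. card (pos_walks h n (int k)))"
  unfolding pos_meanders_eq by (rule card_UN_disjoint) (simp, simp, auto simp: pos_walks_def)

definition Phi :: "complex \<Rightarrow> real fps \<Rightarrow> complex fps" where
  "Phi c f = Abs_fps (\<lambda>m. c^m * complex_of_real (f$m))"

lemma Phi_nth [simp]: "Phi c f $ m = c^m * complex_of_real (f$m)"
  by (simp add: Phi_def)

lemma Phi_mult: "Phi c (f * g) = Phi c f * Phi c g"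
proof (rule fps_ext)
  fix m
  have "(Phi c f * Phi c g) $ m = (\<Sum>i=0..m. c^i * of_real (f$i) * (c^(m-i) * of_real (g$(m-i))))"
    by (simp add: fps_mult_nth)
  also have "\<dots> = (\<Sum>i=0..m. c^m * (of_real (f$i) * of_real (g$(m-i))))"
  proof (rule sum.cong)
    fix i assume "i \<in> {0..m}"
    then have "c^i * c^(m-i) = c^m" by (simp flip: power_add)
    then show "c^i * of_real (f$i) * (c^(m-i) * of_real (g$(m-i))) = c^m * (of_real (f$i) * of_real (g$(m-i)))"
      by (metis (no_types, lifting) mult.assoc mult.left_commute)
  qed simp
  also have "\<dots> = Phi c (f * g) $ m"
    by (simp add: fps_mult_nth sum_distrib_left)
  finally show "Phi c (f * g) $ m = (Phi c f * Phi c g) $ m" ..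
qed

lemma Phi_one [simp]: "Phi c 1 = 1"
  by (rule fps_ext) simp

lemma Phi_add: "Phi c (f + g) = Phi c f + Phi c g"
  by (rule fps_ext) (simp add: algebra_simps)

lemma Phi_sum: "Phi c (\<Sum>x\<in>A. f x) = (\<Sum>x\<in>A. Phi c (f x))"
  by (induction A rule: infinite_finite_induct) (auto simp: Phi_add fps_ext)

lemma Phi_power: "Phi c (f ^ k) = Phi c f ^ k"
  by (induction k) (simp_all add: Phi_mult)

lemma Phi_X_power: "Phi c (fps_X ^ k) = fps_const (c^k) * fps_X ^ k"
  by (rule fps_ext) (simp add: fps_X_power_nth)

definition om :: "nat \<Rightarrow> complex" where "om h = exp (2 * complex_of_real pi * \<i> / of_nat h)"

lemma om_power: "om h ^ j = exp (of_nat j * (2 * complex_of_real pi * \<i> / of_nat h))"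
  unfolding om_def by (rule exp_of_nat_mult[symmetric])

lemma om_power_h: assumes "h \<ge> 1" shows "om h ^ h = 1"
  using assms by (simp add: om_power)

lemma om_inj: assumes "j < h" "k < h" "om h ^ j = om h ^ k" shows "j = k"
proof -
  from assms(3) obtain n :: int where
    e: "of_nat j * (2 * complex_of_real pi * \<i> / of_nat h) =
        of_nat k * (2 * complex_of_real pi * \<i> / of_nat h) + (of_int (2 * n) * pi) * \<i>"
    unfolding om_power exp_eq by blast
  have hp: "h > 0" using assms by simp
  have "Im (of_nat j * (2 * complex_of_real pi * \<i> / of_nat h)) = 2 * pi * real j / real h"
    by (simp add: Im_divide_of_nat)
  moreover have "Im (of_nat k * (2 * complex_of_real pi * \<i> / of_nat h) + (of_int (2 * n) * pi) * \<i>)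
      = 2 * pi * real k / real h + 2 * real_of_int n * pi"
    by (simp add: Im_divide_of_nat)
  ultimately have "2 * pi * real j / real h = 2 * pi * real k / real h + 2 * real_of_int n * pi"
    using e by metis
  then have "(2*pi) * real j = (2*pi) * (real k + real_of_int n * real h)"
    using hp by (simp add: field_simps)
  then have "real j = real k + real_of_int n * real h"
  proof -
    have c: "2*pi \<noteq> (0::real)" by simp
    show ?thesis using c \<open>(2*pi) * real j = (2*pi) * (real k + real_of_int n * real h)\<close>
      by simp
  qed
  then have "real_of_int (int j) = real_of_int (int k + n * int h)" by simp
  then have ji: "int j = int k + n * int h" by (simp only: of_int_eq_iff)
  show ?thesis
  proof (cases "n = 0")
    case True then show ?thesis using ji by simp
  next
    case False
    then have "1 \<le> \<bar>n\<bar>" by arith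
    then have "1 * int h \<le> \<bar>n\<bar> * int h" by (rule mult_right_mono) simp
    then have "\<bar>n * int h\<bar> \<ge> int h" by (simp add: abs_mult)
    then show ?thesis using ji assms by linarith
  qed
qed

definition uu :: "nat \<Rightarrow> nat \<Rightarrow> complex fps" where "uu h j = Phi (om h ^ j) (UU h)"
definition Ed :: "nat \<Rightarrow> nat set" where "Ed h = {..2*h} - {h}"

lemma finite_Ed [simp]: "finite (Ed h)" by (simp add: Ed_def)

lemma uu_pow_nth: "h \<ge> 1 \<Longrightarrow> (uu h j ^ i) $ m = (om h ^ j)^m * Ucoef h m i"
  by (simp add: uu_def Phi_power[symmetric] Ucoef_UU)

lemma uu_root:
  assumes h: "h \<ge> 1"
  shows "uu h j ^ h = fps_X^h * (\<Sum>e\<in>Ed h. uu h j ^ e)"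
proof -
  have "uu h j ^ h = Phi (om h ^ j) (UU h ^ h)" by (simp add: uu_def Phi_power)
  also have "\<dots> = Phi (om h^j) (fps_X^h) * (\<Sum>e\<in>Ed h. uu h j ^ e)"
    by (simp add: UU_root[OF h] Phi_mult Phi_sum Phi_power uu_def Ed_def)
  also have "Phi (om h^j) (fps_X^h) = fps_X^h"
  proof -
    have "(om h ^ j) ^ h = (om h ^ h) ^ j" by (simp flip: power_mult add: mult.commute)
    then have "(om h ^ j) ^ h = 1" using om_power_h[OF h] by simp
    then show ?thesis by (simp add: Phi_X_power)
  qed
  finally show ?thesis .
qed

lemma uu_1: "uu h j $ Suc 0 = om h ^ j" using UU_1[of h] by (simp add: uu_def)

lemma uu_inj: assumes "h \<ge> 1" shows "inj_on (uu h) {..<h}"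
proof (rule inj_onI)
  fix j k assume j: "j \<in> {..<h}" and k: "k \<in> {..<h}" and e: "uu h j = uu h k"
  then have "uu h j $ Suc 0 = uu h k $ Suc 0" by simp
  then have "om h ^ j = om h ^ k" by (simp add: uu_1)
  then show "j = k" using om_inj j k by auto
qed

definition pp :: "nat \<Rightarrow> complex fps poly" where
  "pp h = monom 1 h - smult (fps_X^h) (\<Sum>e\<in>Ed h. monom 1 e)"

lemma coeff_pp: "coeff (pp h) e = (if e = h then 1 else 0) - (if e \<in> Ed h then fps_X^h else 0)"
proof -
  have "coeff (\<Sum>e'\<in>Ed h. monom (1::complex fps) e') e = (\<Sum>e'\<in>Ed h. if e' = e then 1 else 0)"
    by (simp add: coeff_sum coeff_monom)
  also have "\<dots> = (if e \<in> Ed h then 1 else 0)" by (simp add: sum.delta)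
  finally show ?thesis by (simp add: pp_def coeff_monom)
qed

lemma degree_pp: assumes h: "h \<ge> 1" shows "degree (pp h) = 2*h"
proof (rule antisym)
  show "degree (pp h) \<le> 2*h"
    by (rule degree_le) (auto simp: coeff_pp Ed_def)
  have "coeff (pp h) (2*h) \<noteq> 0" using h by (simp add: coeff_pp Ed_def)
  then show "2*h \<le> degree (pp h)" by (rule le_degree)
qed

lemma poly_pp: "h \<ge> 1 \<Longrightarrow> poly (pp h) (uu h j) = 0"
  by (simp add: pp_def poly_sum poly_monom uu_root)

lemma reflect_pp: assumes h: "h \<ge> 1" shows "reflect_poly (pp h) = pp h"
proof (rule poly_eqI)
  fix e
  show "coeff (reflect_poly (pp h)) e = coeff (pp h) e"
  proof (cases "e \<le> 2*h")
    case True
    have "(2*h - e = h) = (e = h)" "(2*h - e \<in> Ed h) = (e \<in> Ed h)" using True by (auto simp: Ed_def)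
    then show ?thesis using True by (simp add: coeff_reflect_poly degree_pp[OF h] coeff_pp)
  next
    case False
    then show ?thesis using h by (simp add: coeff_reflect_poly degree_pp[OF h] coeff_pp Ed_def)
  qed
qed

lemma reflect_linear: "u \<noteq> 0 \<Longrightarrow> reflect_poly [:-u, 1:] = [:1, -(u::'a::comm_ring_1):]"
  by (rule poly_eqI) (simp add: coeff_reflect_poly coeff_pCons split: nat.split)

lemma uu_nz: "uu h j \<noteq> 0"
proof
  assume "uu h j = 0"
  then have "uu h j $ Suc 0 = 0" by simp
  then show False by (simp add: uu_1 om_def)
qed

lemma pp_factor:
  assumes h: "h \<ge> 1"
  obtains B where "pp h = (\<Prod>j<h. [:1, -uu h j:]) * B" "degree B \<le> h"
proof -
  define AA where "AA = (\<Prod>j<h. [:-uu h j, 1:])"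
  have "AA dvd pp h" unfolding AA_def
    by (rule prod_linear_dvd) (auto simp: uu_inj[OF h] poly_pp[OF h])
  then obtain B0 where B0: "pp h = AA * B0" by (elim dvdE)
  have dA: "degree AA = h" unfolding AA_def by (subst degree_prod_sum_eq) auto
  have ppnz: "pp h \<noteq> 0" using degree_pp[OF h] h by (metis degree_0 mult_is_0 zero_neq_numeral le_zero_eq not_one_le_zero)
  then have nz: "AA \<noteq> 0" "B0 \<noteq> 0" using B0 by auto
  have "degree (pp h) = degree AA + degree B0" using B0 nz by (simp add: degree_mult_eq)
  then have dB: "degree B0 = h" using dA degree_pp[OF h] by simp
  have "pp h = reflect_poly (pp h)" using reflect_pp[OF h] by simp
  also have "\<dots> = reflect_poly AA * reflect_poly B0" by (simp add: B0 reflect_poly_mult)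
  also have "reflect_poly AA = (\<Prod>j<h. [:1, -uu h j:])"
    unfolding AA_def reflect_poly_prod by (intro prod.cong refl reflect_linear uu_nz)
  finally have "pp h = (\<Prod>j<h. [:1, -uu h j:]) * reflect_poly B0" .
  moreover have "degree (reflect_poly B0) \<le> h" using degree_reflect_poly_le[of B0] dB by simp
  ultimately show ?thesis by (rule that)
qed

definition geo :: "'a::comm_ring_1 \<Rightarrow> 'a fps" where "geo u = Abs_fps (\<lambda>i. u^i)"

lemma geo_inv: "fps_of_poly [:1, -u:] * geo u = 1"
proof -
  have e: "fps_of_poly [:1, -u:] * geo u = geo u + fps_const (-u) * (fps_X * geo u)"
    by (simp add: fps_of_poly_pCons algebra_simps)
  show ?thesis unfolding e
  proof (rule fps_ext)
    fix k
    show "(geo u + fps_const (-u) * (fps_X * geo u)) $ k = 1 $ k"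
      by (cases k) (simp_all add: geo_def)
  qed
qed

definition GG :: "nat \<Rightarrow> complex fps fps" where "GG h = (\<Prod>j<h. geo (uu h j))"

lemma EE_GG: "fps_of_poly (\<Prod>j<h. [:1, -uu h j:]) * GG h = 1"
  by (simp add: GG_def fps_of_poly_prod prod.distrib[symmetric] geo_inv)

lemma GG_nth: "GG h $ m = (\<Sum>is\<in>{is. length is = h \<and> sum_list is = m}. \<Prod>j<h. uu h j ^ (is!j))"
  unfolding GG_def fps_prod_nth_lists by (simp add: geo_def)

lemma GG_0: "GG h $ 0 = 1"
proof -
  have "{is::nat list. length is = h \<and> sum_list is = 0} = {replicate h 0}"
    using natpermute_0'[of h] by (auto simp: natpermute_def split: if_splits)
  then show ?thesis by (simp add: GG_nth)
qed

lemma GG_rec: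
  assumes h: "h \<ge> 1" and m: "m \<ge> 1"
  shows "GG h $ m = fps_X^h * (\<Sum>e\<in>Ed h \<inter> {..m+h}. GG h $ (m+h-e))"
proof -
  obtain B where B: "pp h = (\<Prod>j<h. [:1, -uu h j:]) * B" "degree B \<le> h"
    using pp_factor[OF h] by blast
  have "fps_of_poly (pp h) * GG h = fps_of_poly B * (fps_of_poly (\<Prod>j<h. [:1, -uu h j:]) * GG h)"
    by (simp add: B(1) fps_of_poly_mult algebra_simps)
  then have e: "fps_of_poly (pp h) * GG h = fps_of_poly B" by (simp add: EE_GG)
  have "(fps_of_poly (pp h) * GG h) $ (m+h) = 0"
    unfolding e fps_of_poly_nth using B(2) m by (intro coeff_eq_0) simp
  moreover have "(fps_of_poly (pp h) * GG h) $ (m+h) =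
      (\<Sum>e=0..m+h. (if e = h then 1 else 0) * GG h $ (m+h-e))
    - (\<Sum>e=0..m+h. (if e \<in> Ed h then fps_X^h * GG h $ (m+h-e) else 0))"
  proof -
    have "(fps_of_poly (pp h) * GG h) $ (m+h) = (\<Sum>e=0..m+h. coeff (pp h) e * GG h $ (m+h-e))"
      by (simp add: fps_mult_nth fps_of_poly_nth)
    also have "\<dots> = (\<Sum>e=0..m+h. (if e = h then 1 else 0) * GG h $ (m+h-e)
         - (if e \<in> Ed h then fps_X^h * GG h $ (m+h-e) else 0))"
      by (intro sum.cong refl) (simp add: coeff_pp left_diff_distrib)
    also have "\<dots> = (\<Sum>e=0..m+h. (if e = h then 1 else 0) * GG h $ (m+h-e))
    - (\<Sum>e=0..m+h. (if e \<in> Ed h then fps_X^h * GG h $ (m+h-e) else 0))"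
      by (rule sum_subtractf)
    finally show ?thesis .
  qed
  moreover have "(\<Sum>e=0..m+h. (if e = h then 1 else 0) * GG h $ (m+h-e)) = GG h $ m"
  proof -
    have "(\<Sum>e=0..m+h. (if e = h then 1 else 0) * GG h $ (m+h-e)) =
          (\<Sum>e=0..m+h. if e = h then GG h $ (m+h-e) else 0)"
      by (intro sum.cong refl) simp
    also have "\<dots> = GG h $ m" by (simp add: sum.delta)
    finally show ?thesis .
  qed
  moreover have "(\<Sum>e=0..m+h. (if e \<in> Ed h then fps_X^h * GG h $ (m+h-e) else 0)) =
      fps_X^h * (\<Sum>e\<in>Ed h \<inter> {..m+h}. GG h $ (m+h-e))"
  proof -
    have "(\<Sum>e=0..m+h. (if e \<in> Ed h then fps_X^h * GG h $ (m+h-e) else 0)) =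
        (\<Sum>e\<in>{0..m+h} \<inter> Ed h. fps_X^h * GG h $ (m+h-e))"
      by (simp add: sum.inter_restrict)
    also have "{0..m+h} \<inter> Ed h = Ed h \<inter> {..m+h}" by auto
    finally show ?thesis by (simp add: sum_distrib_left)
  qed
  ultimately show ?thesis by (metis right_minus_eq)
qed

definition gc :: "nat \<Rightarrow> nat \<Rightarrow> nat \<Rightarrow> complex" where "gc h n m = (GG h $ m) $ (n*h)"

lemma gc_0: assumes h: "h \<ge> 1" shows "gc h 0 m = (if m = 0 then 1 else 0)"
proof (cases "m = 0")
  case True then show ?thesis by (simp add: gc_def GG_0)
next
  case False
  then show ?thesis using h by (simp add: gc_def GG_rec fps_X_power_mult_nth)
qed

lemma gc_Suc0: "gc h (Suc n) 0 = 0" if "h \<ge> 1"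
  using that by (simp add: gc_def GG_0)

lemma gc_Suc:
  assumes h: "h \<ge> 1" and m: "m \<ge> 1"
  shows "gc h (Suc n) m = (\<Sum>e\<in>Ed h \<inter> {..m+h}. gc h n (m+h-e))"
  using h m by (simp add: gc_def GG_rec[OF h m] fps_X_power_mult_nth fps_sum_nth)

lemma Ed_step_bij: "bij_betw (\<lambda>e. int e - int h) (Ed h) (step_set h)"
proof (rule bij_betw_byWitness[where f' = "\<lambda>d. nat (d + int h)"])
  show "\<forall>a\<in>Ed h. nat (int a - int h + int h) = a" by simp
  show "\<forall>d\<in>step_set h. int (nat (d + int h)) - int h = d" by (auto simp: step_set_def)
  show "(\<lambda>e. int e - int h) ` Ed h \<subseteq> step_set h" by (auto simp: Ed_def step_set_def)
  show "(\<lambda>d. nat (d + int h)) ` step_set h \<subseteq> Ed h" by (auto simp: Ed_def step_set_def)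
qed

lemma walks_gc:
  assumes h: "h \<ge> 1"
  shows "of_nat (card (pos_walks h n (int m))) = gc h n m"
proof (induction n arbitrary: m)
  case 0
  then show ?case using h by (simp add: pos_walks_0 gc_0)
next
  case (Suc n)
  show ?case
  proof (cases "m = 0")
    case True
    then show ?thesis using h by (simp add: pos_walks_neg gc_Suc0)
  next
    case False
    then have m: "m \<ge> 1" by simp
    have "card (pos_walks h (Suc n) (int m)) = (\<Sum>d\<in>step_set h. card (pos_walks h n (int m - d)))"
      using m by (intro card_pos_walks_Suc) simp
    also have "\<dots> = (\<Sum>e\<in>Ed h. card (pos_walks h n (int m - (int e - int h))))"
      by (rule sum.reindex_bij_betw[OF Ed_step_bij, symmetric])
    also have "\<dots> = (\<Sum>e\<in>Ed h \<inter> {..m+h}. card (pos_walks h n (int (m + h - e))))"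
    proof -
      have "(\<Sum>e\<in>Ed h. card (pos_walks h n (int m - (int e - int h)))) =
            (\<Sum>e\<in>Ed h \<inter> {..m+h}. card (pos_walks h n (int m - (int e - int h))))"
        by (rule sum.mono_neutral_right) (simp, blast, (intro ballI card_pos_walks_neg, auto))
      also have "\<dots> = (\<Sum>e\<in>Ed h \<inter> {..m+h}. card (pos_walks h n (int (m + h - e))))"
        by (intro sum.cong refl) (auto simp: of_nat_diff algebra_simps)
      finally show ?thesis .
    qed
    finally have "of_nat (card (pos_walks h (Suc n) (int m))) =
        (\<Sum>e\<in>Ed h \<inter> {..m+h}. (of_nat (card (pos_walks h n (int (m + h - e)))) :: complex))"
      by simp
    also have "\<dots> = (\<Sum>e\<in>Ed h \<inter> {..m+h}. gc h n (m + h - e))"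
      by (intro sum.cong refl) (rule Suc.IH)
    also have "\<dots> = gc h (Suc n) m" using gc_Suc[OF h m] by simp
    finally show ?thesis .
  qed
qed

lemma gc_formula:
  assumes h: "h \<ge> 1"
  shows "gc h n k = (\<Sum>ns\<in>{ns. length ns = h \<and> sum_list ns = n * h}.
              \<Sum>is\<in>{is. length is = h \<and> sum_list is = k}.
                (\<Prod>j<h. Ucoef h (ns ! j) (is ! j)) * om h ^ (\<Sum>j<h. j * ns ! j))"
proof -
  have "gc h n k = (\<Sum>is\<in>{is. length is = h \<and> sum_list is = k}. fps_nth (\<Prod>j<h. uu h j ^ (is!j)) (n*h))"
    by (simp add: gc_def GG_nth fps_sum_nth)
  also have "\<dots> = (\<Sum>is\<in>{is. length is = h \<and> sum_list is = k}.
      \<Sum>ns\<in>{ns. length ns = h \<and> sum_list ns = n * h}.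
                (\<Prod>j<h. Ucoef h (ns ! j) (is ! j)) * om h ^ (\<Sum>j<h. j * ns ! j))"
  proof (intro sum.cong refl)
    fix "is" ns
    show "fps_nth (\<Prod>j<h. uu h j ^ (is!j)) (n*h) = (\<Sum>ns\<in>{ns. length ns = h \<and> sum_list ns = n * h}.
                (\<Prod>j<h. Ucoef h (ns ! j) (is ! j)) * om h ^ (\<Sum>j<h. j * ns ! j))"
      unfolding fps_prod_nth_lists
    proof (intro sum.cong refl)
      fix ns
      have "(\<Prod>j<h. fps_nth (uu h j ^ (is!j)) (ns!j)) = (\<Prod>j<h. om h ^ (j * ns!j) * Ucoef h (ns ! j) (is ! j))"
        by (intro prod.cong refl) (simp add: uu_pow_nth[OF h] power_mult)
      also have "\<dots> = (\<Prod>j<h. Ucoef h (ns ! j) (is ! j)) * om h ^ (\<Sum>j<h. j * ns ! j)"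
        by (simp add: prod.distrib power_sum)
      finally show "(\<Prod>j<h. fps_nth (uu h j ^ (is!j)) (ns!j)) = (\<Prod>j<h. Ucoef h (ns ! j) (is ! j)) * om h ^ (\<Sum>j<h. j * ns ! j)" .
    qed
  qed
  also have "\<dots> = (\<Sum>ns\<in>{ns. length ns = h \<and> sum_list ns = n * h}.
              \<Sum>is\<in>{is. length is = h \<and> sum_list is = k}.
                (\<Prod>j<h. Ucoef h (ns ! j) (is ! j)) * om h ^ (\<Sum>j<h. j * ns ! j))"
    by (rule sum.swap)
  finally show ?thesis .
qed

lemma finite_L: "finite {is::nat list. length is = h \<and> sum_list is = k}"
proof -
  have "{is::nat list. length is = h \<and> sum_list is = k} \<subseteq> {ns. set ns \<subseteq> {0..k} \<and> length ns = h}"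
    by (auto simp: member_le_sum_list)
  moreover have "finite {ns::nat list. set ns \<subseteq> {0..k} \<and> length ns = h}"
    by (rule finite_lists_length_eq) simp
  ultimately show ?thesis by (rule finite_subset)
qed

lemma Ucoef_nz: assumes "h \<ge> 1" "Ucoef h m i \<noteq> 0" shows "i \<le> m"
proof (rule ccontr)
  assume "\<not> i \<le> m"
  then have "(UU h ^ i) $ m = 0" by (intro UU_pow_nth_lt) simp
  then show False using assms by (simp add: Ucoef_UU)
qed

theorem theorem4p11:
  fixes h n k :: nat
  assumes "h \<ge> 1" and "k \<ge> 1"
  defines "\<omega> \<equiv> exp (2 * complex_of_real pi * \<i> / of_nat h)"
  shows "of_nat (card (pos_walks h n (int k))) =
           (\<Sum>ns\<in>{ns. length ns = h \<and> sum_list ns = n * h}.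
              \<Sum>is\<in>{is. length is = h \<and> sum_list is = k}.
                (\<Prod>j<h. Ucoef h (ns ! j) (is ! j)) * \<omega> ^ (\<Sum>j<h. j * ns ! j)) \<and>
         of_nat (card (pos_meanders h n)) =
           (\<Sum>ns\<in>{ns. length ns = h \<and> sum_list ns = n * h}.
              \<Sum>\<^sub>\<infinity>is\<in>{is. length is = h}.
                (\<Prod>j<h. Ucoef h (ns ! j) (is ! j)) * \<omega> ^ (\<Sum>j<h. j * ns ! j))"
proof -
  have h: "h \<ge> 1" by fact
  have om: "\<omega> = om h" by (simp add: \<omega>_def om_def)
  define T where "T = (\<lambda>ns is. (\<Prod>j<h. Ucoef h (ns ! j) (is ! j)) * om h ^ (\<Sum>j<h. j * ns ! j))"
  define NS where "NS = {ns::nat list. length ns = h \<and> sum_list ns = n * h}"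
  have W: "of_nat (card (pos_walks h n (int k'))) =
       (\<Sum>ns\<in>NS. \<Sum>is\<in>{is. length is = h \<and> sum_list is = k'}. T ns is)" for k'
    unfolding walks_gc[OF h] gc_formula[OF h] T_def NS_def ..
  have "of_nat (card (pos_meanders h n)) = (\<Sum>k'=0..n*h. (of_nat (card (pos_walks h n (int k'))) :: complex))"
    by (simp add: card_pos_meanders)
  also have "\<dots> = (\<Sum>k'=0..n*h. \<Sum>ns\<in>NS. \<Sum>is\<in>{is. length is = h \<and> sum_list is = k'}. T ns is)"
    by (simp add: W)
  also have "\<dots> = (\<Sum>ns\<in>NS. \<Sum>k'=0..n*h. \<Sum>is\<in>{is. length is = h \<and> sum_list is = k'}. T ns is)"
    by (rule sum.swap)
  also have "\<dots> = (\<Sum>ns\<in>NS. \<Sum>\<^sub>\<infinity>is\<in>{is. length is = h}. T ns is)"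
  proof (intro sum.cong refl)
    fix ns assume ns: "ns \<in> NS"
    define S where "S = (\<Union>k'\<in>{0..n*h}. {is::nat list. length is = h \<and> sum_list is = k'})"
    have "(\<Sum>k'=0..n*h. \<Sum>is\<in>{is. length is = h \<and> sum_list is = k'}. T ns is) = (\<Sum>is\<in>S. T ns is)"
      unfolding S_def by (rule sum.UNION_disjoint[symmetric]) (auto simp: finite_L)
    also have "\<dots> = (\<Sum>\<^sub>\<infinity>is\<in>S. T ns is)"
      by (rule infsum_finite[symmetric]) (auto simp: S_def finite_L)
    also have "\<dots> = (\<Sum>\<^sub>\<infinity>is\<in>{is. length is = h}. T ns is)"
    proof (rule infsum_cong_neutral)
      fix "is" assume "is": "is \<in> {is. length is = h} - S"
      show "T ns is = 0"
      proof (rule ccontr)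
        assume "T ns is \<noteq> 0"
        then have "\<forall>j<h. Ucoef h (ns ! j) (is ! j) \<noteq> 0" by (auto simp: T_def)
        then have le: "\<forall>j<h. is ! j \<le> ns ! j" using Ucoef_nz[OF h] by blast
        have "sum_list is = (\<Sum>j<h. is ! j)" using "is" by (simp add: sum_list_sum_nth atLeast0LessThan)
        also have "\<dots> \<le> (\<Sum>j<h. ns ! j)" using le by (intro sum_mono) auto
        also have "\<dots> = sum_list ns" using ns by (simp add: NS_def sum_list_sum_nth atLeast0LessThan)
        finally have "sum_list is \<le> n * h" using ns by (simp add: NS_def)
        then have "is \<in> S" using "is" by (auto simp: S_def)
        then show False using "is" by blast
      qed
    qed (auto simp: S_def)
    finally show "(\<Sum>k'=0..n*h. \<Sum>is\<in>{is. length is = h \<and> sum_list is = k'}. T ns is) =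
        (\<Sum>\<^sub>\<infinity>is\<in>{is. length is = h}. T ns is)" .
  qed
  finally have M: "of_nat (card (pos_meanders h n)) = (\<Sum>ns\<in>NS. \<Sum>\<^sub>\<infinity>is\<in>{is. length is = h}. T ns is)" .
  show ?thesis using W[of k] M unfolding om T_def NS_def by simp
qed

end
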